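(* Let $R$ be a nonempty set of permutations, and let $Rn$ be the set obtained by appending to each $\sigma\in R$ (of length $m$) the entry $m+1$. Let $$P(x)=\sum_{n\ge0}|\mathfrak S_n(1243,2143,R)|x^n,\qquad Q(x)=\sum_{n\ge0}|\mathfrak S_n(1243,2143,Rn)|x^n.$$ Then $$Q(x)=\frac{2-P(x)}{2-x-P(x)}.$$
   Context: $\mathfrak S_n(S)$ denotes the set of permutations of $\{1,\dots,n\}$ avoiding every pattern in the set $S$, where $\pi$ avoids $\sigma$ if no subsequence of $\pi$ has the same relative order as $\sigma$. For example, if $R=\{42531,4231,312\}$ then $Rn=\{425316,42315,3124\}$. *)

theory Defs
  imports "HOL-Computational_Algebra.Formal_Power_Series" "HOL-Library.Sublist"
begin

definition is_perm :: "nat list \<Rightarrow> bool" where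
  "is_perm xs \<longleftrightarrow> distinct xs \<and> set xs = {1..length xs}"

definition order_iso :: "nat list \<Rightarrow> nat list \<Rightarrow> bool" where
  "order_iso a b \<longleftrightarrow> length a = length b \<and>
     (\<forall>i < length a. \<forall>j < length a. (a ! i < a ! j) \<longleftrightarrow> (b ! i < b ! j))"

definition contains :: "nat list \<Rightarrow> nat list \<Rightarrow> bool" where
  "contains \<pi> \<sigma> \<longleftrightarrow> (\<exists>s. subseq s \<pi> \<and> order_iso s \<sigma>)"

definition avoids :: "nat list \<Rightarrow> nat list \<Rightarrow> bool" where
  "avoids \<pi> \<sigma> \<longleftrightarrow> \<not> contains \<pi> \<sigma>"

definition Av :: "nat \<Rightarrow> nat list set \<Rightarrow> nat list set" where
  "Av n S = {\<pi>. is_perm \<pi> \<and> length \<pi> = n \<and> (\<forall>\<sigma>\<in>S. avoids \<pi> \<sigma>)}"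

definition genfun :: "nat list set \<Rightarrow> rat fps" where
  "genfun S = Abs_fps (\<lambda>n. of_nat (card (Av n S)))"

definition append_max :: "nat list \<Rightarrow> nat list" where
  "append_max \<sigma> = \<sigma> @ [length \<sigma> + 1]"

end

theory Submission
  imports Defs
begin

lemma subseq_distinct: "subseq xs ys \<Longrightarrow> distinct ys \<Longrightarrow> distinct xs"
  by (induction rule: list_emb.induct) (auto dest: list_emb_set)

lemma subseq_map_inv:
  assumes "subseq s (map f xs)" shows "\<exists>s0. s = map f s0 \<and> subseq s0 xs"
proof -
  obtain N where "s = nths (map f xs) N" using assms subseq_conv_nths by blast
  then have "s = map f (nths xs N)" by (simp add: nths_map)
  moreover have "subseq (nths xs N) xs" using subseq_conv_nths by blast
  ultimately show ?thesis by blast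
qed

lemma subseq_single_right: "subseq s [x] \<longleftrightarrow> s = [] \<or> s = [x]"
  by (cases s) auto

lemma subseq_split3:
  assumes "subseq s (xs @ x # ys)"
  shows "\<exists>s1 s2. subseq s1 xs \<and> subseq s2 ys \<and> (s = s1 @ s2 \<or> s = s1 @ x # s2)"
proof -
  from assms obtain s1 r where "s = s1 @ r" "subseq s1 xs" "subseq r ([x] @ ys)"
    by (auto elim: subseq_appendE)
  moreover from \<open>subseq r ([x] @ ys)\<close> obtain r1 s2 where "r = r1 @ s2" "subseq r1 [x]" "subseq s2 ys"
    using subseq_append_iff[of r "[x]" ys] by blast
  moreover have "r1 = [] \<or> r1 = [x]" using subseq_single_right[THEN iffD1, OF \<open>subseq r1 [x]\<close>] .
  moreover have "s = s1 @ s2 \<or> s = s1 @ x # s2"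
    using \<open>r1 = [] \<or> r1 = [x]\<close> \<open>s = s1 @ r\<close> \<open>r = r1 @ s2\<close> by force
  ultimately show ?thesis by blast
qed

lemma distinct_sub_single: "distinct xs \<Longrightarrow> set xs \<subseteq> {x} \<Longrightarrow> xs = [] \<or> xs = [x]"
proof (cases xs)
  case (Cons a t)
  assume "distinct xs" "set xs \<subseteq> {x}"
  then have "t = []" using Cons by (cases t) auto
  then show ?thesis using Cons \<open>set xs \<subseteq> {x}\<close> by auto
qed simp

lemma subseq_set: "subseq xs ys \<Longrightarrow> set xs \<subseteq> set ys"
  by (induction rule: list_emb.induct) auto

lemma contains_trans: "subseq xs ys \<Longrightarrow> contains xs \<sigma> \<Longrightarrow> contains ys \<sigma>"
  unfolding contains_def using subseq_order.trans by blast

lemma order_iso_map: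
  assumes "\<forall>x\<in>set s. \<forall>y\<in>set s. x < y \<longrightarrow> f x < f y"
  shows "order_iso (map f s) \<sigma> \<longleftrightarrow> order_iso s \<sigma>"
proof -
  have "\<forall>i<length s. \<forall>j<length s. (f (s!i) < f (s!j)) = (s!i < s!j)"
    using assms by (metis nth_mem not_less_iff_gr_or_eq less_asym)
  then show ?thesis unfolding order_iso_def by auto
qed

lemma contains_map:
  assumes "\<forall>x\<in>set xs. \<forall>y\<in>set xs. x < y \<longrightarrow> f x < f y"
  shows "contains (map f xs) \<sigma> \<longleftrightarrow> contains xs \<sigma>"
proof
  assume "contains (map f xs) \<sigma>"
  then obtain s where s: "subseq s (map f xs)" "order_iso s \<sigma>" unfolding contains_def by blast
  then obtain s0 where "s = map f s0" "subseq s0 xs" using subseq_map_inv by blast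
  moreover have "set s0 \<subseteq> set xs" using \<open>subseq s0 xs\<close> subseq_set by blast
  ultimately show "contains xs \<sigma>" using s assms order_iso_map[of s0 f \<sigma>] unfolding contains_def
    by (metis subsetD)
next
  assume "contains xs \<sigma>"
  then obtain s where s: "subseq s xs" "order_iso s \<sigma>" unfolding contains_def by blast
  have "set s \<subseteq> set xs" using s(1) subseq_set by blast
  then have "order_iso (map f s) \<sigma>" using s assms order_iso_map[of s f \<sigma>] by (metis subsetD)
  then show "contains (map f xs) \<sigma>" using subseq_map[OF s(1)] unfolding contains_def by blast
qed

lemma perm_vals: "is_perm \<sigma> \<Longrightarrow> x \<in> set \<sigma> \<Longrightarrow> x \<le> length \<sigma> \<and> 1 \<le> x"
  unfolding is_perm_def by auto

lemma order_iso_snoc: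
  assumes "is_perm \<sigma>"
  shows "order_iso (s0 @ [v]) (\<sigma> @ [length \<sigma> + 1]) \<longleftrightarrow> order_iso s0 \<sigma> \<and> (\<forall>x\<in>set s0. x < v)"
proof
  assume a: "order_iso (s0 @ [v]) (\<sigma> @ [length \<sigma> + 1])"
  then have len: "length s0 = length \<sigma>" unfolding order_iso_def by simp
  have "order_iso s0 \<sigma>" unfolding order_iso_def
  proof (intro conjI allI impI len)
    fix i j assume ij: "i < length s0" "j < length s0"
    have "((s0 @ [v]) ! i < (s0 @ [v]) ! j) = ((\<sigma> @ [length \<sigma> + 1]) ! i < (\<sigma> @ [length \<sigma> + 1]) ! j)"
      using a ij len unfolding order_iso_def by simp
    then show "(s0 ! i < s0 ! j) = (\<sigma> ! i < \<sigma> ! j)"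
      using ij len by (simp add: nth_append)
  qed
  moreover have "\<forall>x\<in>set s0. x < v"
  proof
    fix x assume "x \<in> set s0"
    then obtain i where i: "i < length s0" "s0 ! i = x" by (auto simp: in_set_conv_nth)
    have "\<sigma> ! i < length \<sigma> + 1" using perm_vals[OF assms, of "\<sigma>!i"] i len by simp
    have "((s0 @ [v]) ! i < (s0 @ [v]) ! length s0) = ((\<sigma> @ [length \<sigma> + 1]) ! i < (\<sigma> @ [length \<sigma> + 1]) ! length s0)"
      using a i len unfolding order_iso_def by simp
    then show "x < v" using i len \<open>\<sigma> ! i < length \<sigma> + 1\<close> by (simp add: nth_append)
  qed
  ultimately show "order_iso s0 \<sigma> \<and> (\<forall>x\<in>set s0. x < v)" by blast
next
  assume a: "order_iso s0 \<sigma> \<and> (\<forall>x\<in>set s0. x < v)"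
  then have len: "length s0 = length \<sigma>" unfolding order_iso_def by simp
  have lt: "\<forall>i<length \<sigma>. \<sigma> ! i < length \<sigma> + 1" using perm_vals[OF assms] by (simp add: less_Suc_eq_le)
  show "order_iso (s0 @ [v]) (\<sigma> @ [length \<sigma> + 1])" unfolding order_iso_def
  proof (intro conjI allI impI)
    show "length (s0 @ [v]) = length (\<sigma> @ [length \<sigma> + 1])" using len by simp
    fix i j assume ij: "i < length (s0 @ [v])" "j < length (s0 @ [v])"
    show "((s0 @ [v]) ! i < (s0 @ [v]) ! j) = ((\<sigma> @ [length \<sigma> + 1]) ! i < (\<sigma> @ [length \<sigma> + 1]) ! j)"
    proof (cases "i < length s0")
      case True
      then show ?thesis using ij a len lt unfolding order_iso_def
        by (cases "j < length s0") (auto simp: nth_append less_Suc_eq)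
    next
      case False
      then have "i = length s0" using ij by simp
      show ?thesis
      proof (cases "j < length s0")
        case True
        then have "s0!j < v" using a by auto
        moreover have "\<sigma>!j < length \<sigma> + 1" using lt True len by auto
        ultimately show ?thesis using \<open>i = length s0\<close> True len by (simp add: nth_append)
      next
        case False
        then have "j = length s0" using ij by simp
        then show ?thesis using \<open>i = length s0\<close> len by simp
      qed
    qed
  qed
qed


definition bad4 :: "nat list \<Rightarrow> bool" where
  "bad4 \<pi> \<longleftrightarrow> (\<exists>a b c d. subseq [a,b,c,d] \<pi> \<and> a < d \<and> b < d \<and> d < c)"

lemma oi4: "order_iso [a,b,c,d] [w,x,y,z] \<longleftrightarrow>
  (a<b \<longleftrightarrow> w<x) \<and> (a<c \<longleftrightarrow> w<y) \<and> (a<d \<longleftrightarrow> w<z) \<and>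
  (b<a \<longleftrightarrow> x<w) \<and> (b<c \<longleftrightarrow> x<y) \<and> (b<d \<longleftrightarrow> x<z) \<and>
  (c<a \<longleftrightarrow> y<w) \<and> (c<b \<longleftrightarrow> y<x) \<and> (c<d \<longleftrightarrow> y<z) \<and>
  (d<a \<longleftrightarrow> z<w) \<and> (d<b \<longleftrightarrow> z<x) \<and> (d<c \<longleftrightarrow> z<y)"
  unfolding order_iso_def by (auto simp: All_less_Suc numeral_eq_Suc)

lemma len4: "length s = 4 \<Longrightarrow> \<exists>a b c d. s = [a,b,c,d]"
  by (auto simp: numeral_eq_Suc length_Suc_conv)

lemma contains_S0_bad4:
  assumes "contains \<pi> [1,2,4,3] \<or> contains \<pi> [2,1,4,3]"
  shows "bad4 \<pi>"
proof -
  from assms obtain s where s: "subseq s \<pi>" "order_iso s [1,2,4,3] \<or> order_iso s [2,1,4,3]"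
    unfolding contains_def by blast
  then have "length s = 4" unfolding order_iso_def by auto
  then obtain a b c d where "s = [a,b,c,d]" using len4 by blast
  then show ?thesis using s unfolding bad4_def by (auto simp: oi4)
qed

lemma bad4_contains_S0:
  assumes "bad4 \<pi>" "distinct \<pi>"
  shows "contains \<pi> [1,2,4,3] \<or> contains \<pi> [2,1,4,3]"
proof -
  from assms obtain a b c d where s: "subseq [a,b,c,d] \<pi>" "a < d" "b < d" "d < c"
    unfolding bad4_def by blast
  then have "distinct [a,b,c,d]" using subseq_distinct assms(2) by blast
  then have "a < b \<or> b < a" by auto
  then show ?thesis
  proof
    assume "a < b" then have "order_iso [a,b,c,d] [1,2,4,3]" using s by (auto simp: oi4)
    then show ?thesis using s unfolding contains_def by blast
  next
    assume "b < a" then have "order_iso [a,b,c,d] [2,1,4,3]" using s by (auto simp: oi4)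
    then show ?thesis using s unfolding contains_def by blast
  qed
qed

lemma avoid_S0_iff:
  assumes "distinct \<pi>"
  shows "(\<forall>\<sigma>\<in>{[1,2,4,3],[2,1,4,3]}. avoids \<pi> \<sigma>) \<longleftrightarrow> \<not> bad4 \<pi>"
  using contains_S0_bad4 bad4_contains_S0[OF _ assms] unfolding avoids_def by blast

lemma bad4_subseq: "bad4 xs \<Longrightarrow> subseq xs ys \<Longrightarrow> bad4 ys"
  unfolding bad4_def using subseq_order.trans by blast

lemma bad4_map:
  assumes "\<forall>x\<in>set xs. \<forall>y\<in>set xs. x < y \<longrightarrow> f x < f y" "distinct xs"
  shows "bad4 (map f xs) \<longleftrightarrow> bad4 xs"
proof -
  have i: "inj_on f (set xs)" using assms(1) unfolding inj_on_def by (metis not_less_iff_gr_or_eq)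
  then have "distinct (map f xs)" using assms(2) by (simp add: distinct_map)
  then show ?thesis using avoid_S0_iff assms(2) contains_map[OF assms(1)] unfolding avoids_def by blast
qed

lemma is_perm_intro:
  assumes "distinct xs" "set xs \<subseteq> {1..length xs}"
  shows "is_perm xs"
proof -
  have "card (set xs) = card {1..length xs}" using assms(1) by (simp add: distinct_card)
  then have "set xs = {1..length xs}" using assms(2) by (simp add: card_subset_eq)
  then show ?thesis using assms(1) unfolding is_perm_def by simp
qed

lemma contains_snoc_iff:
  assumes "is_perm \<sigma>"
  shows "contains \<pi> (append_max \<sigma>) \<longleftrightarrow>
    (\<exists>s0 v. subseq (s0 @ [v]) \<pi> \<and> order_iso s0 \<sigma> \<and> (\<forall>x\<in>set s0. x < v))"
proof
  assume "contains \<pi> (append_max \<sigma>)"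
  then obtain s where s: "subseq s \<pi>" "order_iso s (\<sigma> @ [length \<sigma> + 1])"
    unfolding contains_def append_max_def by blast
  then have "s \<noteq> []" unfolding order_iso_def by auto
  then have "s = butlast s @ [last s]" by simp
  then show "\<exists>s0 v. subseq (s0 @ [v]) \<pi> \<and> order_iso s0 \<sigma> \<and> (\<forall>x\<in>set s0. x < v)"
    using s order_iso_snoc[OF assms, of "butlast s" "last s"] by metis
next
  assume "\<exists>s0 v. subseq (s0 @ [v]) \<pi> \<and> order_iso s0 \<sigma> \<and> (\<forall>x\<in>set s0. x < v)"
  then show "contains \<pi> (append_max \<sigma>)"
    using order_iso_snoc[OF assms] unfolding contains_def append_max_def by blast
qed

locale phi_setup =
  fixes \<alpha> \<tau> :: "nat list" and k m t0 n :: nat and tb \<alpha>' :: "nat list" and f :: "nat \<Rightarrow> nat"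
  assumes pa: "is_perm \<alpha>" "\<alpha> \<noteq> []" and pt: "is_perm \<tau>" "\<tau> \<noteq> []"
    and k_def: "k = length \<alpha>" and m_def: "m = length \<tau>" and t0_def: "t0 = hd \<tau>" and tb_def: "tb = tl \<tau>"
    and f_def: "f = (\<lambda>x. if x = 1 then t0 else x + m - 1)" and a'_def: "\<alpha>' = map f \<alpha>"
    and n_def: "n = k + m"
begin

lemma tau_eq: "\<tau> = t0 # tb" using pt(2) t0_def tb_def by simp

lemma km: "k \<ge> 1" "m \<ge> 1" using pa pt k_def m_def by (auto simp: Suc_le_eq)

lemma set_alpha: "set \<alpha> = {1..k}" using pa k_def is_perm_def by simp
lemma set_tau: "set \<tau> = {1..m}" using pt m_def is_perm_def by simp

lemma t0_range: "1 \<le> t0" "t0 \<le> m" using set_tau tau_eq by auto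

lemma tb_props: "distinct (t0 # tb)" "\<forall>x\<in>set tb. 1 \<le> x \<and> x \<le> m \<and> x \<noteq> t0"
  using pt tau_eq set_tau unfolding is_perm_def by auto

lemma f_mono: "\<forall>x\<in>set \<alpha>. \<forall>y\<in>set \<alpha>. x < y \<longrightarrow> f x < f y"
  using set_alpha t0_range unfolding f_def by auto

lemma a'_vals: "\<forall>x\<in>set \<alpha>'. x = t0 \<or> (m + 1 \<le> x \<and> x < n)"
  using set_alpha t0_range unfolding f_def a'_def n_def by auto

lemma t0_in: "t0 \<in> set \<alpha>'"
proof -
  have "1 \<in> set \<alpha>" using set_alpha km by auto
  then show ?thesis unfolding a'_def f_def by force
qed

lemma a'_distinct: "distinct \<alpha>'"
proof -
  have "inj_on f (set \<alpha>)" using f_mono unfolding inj_on_def by (metis not_less_iff_gr_or_eq)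
  then show ?thesis using pa unfolding a'_def is_perm_def by (simp add: distinct_map)
qed

lemma a'_lt: "\<forall>x\<in>set \<alpha>'. x < n"
proof
  fix x assume "x \<in> set \<alpha>'"
  then have "x = t0 \<or> (m + 1 \<le> x \<and> x < n)" using a'_vals by blast
  then show "x < n" using t0_range km n_def by linarith
qed

lemma tb_lt: "\<forall>x\<in>set tb. x < n"
proof
  fix x assume "x \<in> set tb"
  then have "x \<le> m" using tb_props by blast
  then show "x < n" using km n_def by linarith
qed

definition \<pi> where "\<pi> = \<alpha>' @ n # tb"

lemma len_a': "length \<alpha>' = k" using a'_def k_def by simp

lemma pi_len: "length \<pi> = n"
  using len_a' tau_eq m_def n_def unfolding \<pi>_def by (simp add: length_tl)

lemma pi_nth: "\<pi> ! k = n" using len_a' unfolding \<pi>_def by (simp add: nth_append)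

lemma pi_perm: "is_perm \<pi>"
proof (rule is_perm_intro)
  have "\<forall>x\<in>set \<alpha>'. x \<notin> set tb" using a'_vals tb_props by fastforce
  moreover have "n \<notin> set \<alpha>'" using a'_lt by blast
  moreover have "n \<notin> set tb" using tb_lt by blast
  ultimately show "distinct \<pi>" unfolding \<pi>_def using a'_distinct tb_props by auto
  show "set \<pi> \<subseteq> {1..length \<pi>}" unfolding pi_len unfolding \<pi>_def
  proof
    fix x assume "x \<in> set (\<alpha>' @ n # tb)"
    moreover have "\<forall>x\<in>set \<alpha>'. 1 \<le> x" using a'_vals t0_range by fastforce
    ultimately show "x \<in> {1..n}" using a'_lt tb_lt tb_props km n_def by fastforce
  qed
qed

lemma pi_vals: "\<forall>x\<in>set \<pi>. x \<le> n" using pi_perm pi_len unfolding is_perm_def by auto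

lemma tau_sub: "subseq \<tau> \<pi>"
proof -
  have "subseq [t0] \<alpha>'" using t0_in subseq_singleton_left by metis
  moreover have "subseq tb ([n] @ tb)" by (rule subseq_drop_many) simp
  ultimately have "subseq ([t0] @ tb) (\<alpha>' @ ([n] @ tb))" by (rule list_emb_append_mono)
  then show ?thesis unfolding \<pi>_def tau_eq by simp
qed

lemma a'_sub: "subseq (\<alpha>' @ [n]) \<pi>"
  unfolding \<pi>_def by (metis append.assoc append_Cons append_Nil subseq_rev_drop_many subseq_order.order_refl)

lemma small_is_t0: "x \<in> set \<alpha>' \<Longrightarrow> x \<le> m \<Longrightarrow> x = t0"
  using a'_vals by fastforce

lemma bad4_pi: "bad4 \<pi> \<Longrightarrow> bad4 \<alpha>' \<or> bad4 \<tau>"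
proof -
  assume "bad4 \<pi>"
  then obtain a b c d where s: "subseq [a,b,c,d] \<pi>" "a < d" "b < d" "d < c" unfolding bad4_def by blast
  have dist: "distinct [a,b,c,d]" using subseq_distinct s(1) pi_perm is_perm_def by blast
  have "c \<le> n" using subseq_set[OF s(1)] pi_vals by auto
  then have nn: "a \<noteq> n" "b \<noteq> n" "d \<noteq> n" using s by auto
  obtain s1 s2 where sp: "subseq s1 \<alpha>'" "subseq s2 tb" "[a,b,c,d] = s1 @ s2 \<or> [a,b,c,d] = s1 @ n # s2"
    using subseq_split3[OF s(1)[unfolded \<pi>_def]] by blast
  have S1: "set s1 \<subseteq> set \<alpha>'" using subseq_set sp(1) by blast
  have S2: "set s2 \<subseteq> set tb" using subseq_set sp(2) by blast
  show ?thesis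
  proof (cases "[a,b,c,d] = s1 @ s2")
    case True
    note eqB = True
    show ?thesis
    proof (cases "s2 = []")
      case True
      then show ?thesis using \<open>[a,b,c,d] = s1 @ s2\<close> sp(1) s unfolding bad4_def by auto
    next
      case False
      then have "d \<in> set s2" using \<open>[a,b,c,d] = s1 @ s2\<close>
        by (metis last_ConsR last_appendR last_in_set list.distinct(1) last.simps)
      then have "d \<le> m" using S2 tb_props by auto
      have "s1 = [] \<or> s1 = [a] \<or> s1 = [a,b] \<or> s1 = [a,b,c]"
        using \<open>[a,b,c,d] = s1 @ s2\<close> False by (auto simp: Cons_eq_append_conv)
      moreover have "\<not> (a \<in> set s1 \<and> b \<in> set s1)"
      proof
        assume "a \<in> set s1 \<and> b \<in> set s1"
        then have "a = t0" "b = t0" using S1 small_is_t0 s \<open>d \<le> m\<close> by auto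
        then show False using dist by simp
      qed
      ultimately have "s1 = [] \<or> s1 = [a]" by auto
      then show ?thesis
      proof
        assume "s1 = []"
        then have "subseq [a,b,c,d] tb" using sp(2) eqB by simp
        then have "subseq [a,b,c,d] \<tau>" unfolding tau_eq by (rule list_emb.list_emb_Cons)
        then show ?thesis using s unfolding bad4_def by blast
      next
        assume "s1 = [a]"
        then have "a = t0" using S1 small_is_t0 s \<open>d \<le> m\<close> by auto
        have "subseq [b,c,d] tb" using sp(2) eqB \<open>s1 = [a]\<close> by simp
        then have "subseq [a,b,c,d] \<tau>" unfolding tau_eq \<open>a = t0\<close> by simp
        then show ?thesis using s unfolding bad4_def by blast
      qed
    qed
  next
    case False
    then have eq: "[a,b,c,d] = s1 @ n # s2" using sp(3) by blast
    then have "s1 = [a,b]" "s2 = [d]" using nn by (auto simp: Cons_eq_append_conv)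
    then have "d \<le> m" using S2 tb_props by auto
    then have "a = t0" "b = t0" using S1 small_is_t0 s \<open>s1 = [a,b]\<close> by auto
    then show ?thesis using dist by simp
  qed
qed


lemma a'_sub2: "subseq \<alpha>' \<pi>"
  using a'_sub by (metis subseq_order.trans subseq_rev_drop_many subseq_order.order_refl)

lemma contains_a': "contains \<alpha>' \<sigma> \<longleftrightarrow> contains \<alpha> \<sigma>"
  unfolding a'_def using contains_map[OF f_mono] .

lemma rn_alpha:
  assumes "is_perm \<sigma>" "contains \<alpha> \<sigma>"
  shows "contains \<pi> (append_max \<sigma>)"
proof -
  obtain s0 where s0: "subseq s0 \<alpha>'" "order_iso s0 \<sigma>"
    using assms(2) contains_a' unfolding contains_def by blast
  have "subseq (s0 @ [n]) (\<alpha>' @ [n])" using s0(1) by simp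
  then have "subseq (s0 @ [n]) \<pi>" using a'_sub subseq_order.trans by blast
  moreover have "\<forall>x\<in>set s0. x < n" using subseq_set[OF s0(1)] a'_lt by blast
  ultimately show ?thesis using contains_snoc_iff[OF assms(1)] s0(2) by blast
qed

lemma rn_pi:
  assumes "is_perm \<sigma>" "contains \<pi> (append_max \<sigma>)"
  shows "contains \<alpha> \<sigma> \<or> contains \<tau> (append_max \<sigma>)"
proof -
  obtain s0 v where sv: "subseq (s0 @ [v]) \<pi>" "order_iso s0 \<sigma>" "\<forall>x\<in>set s0. x < v"
    using assms contains_snoc_iff by blast
  have dist: "distinct (s0 @ [v])" using subseq_distinct sv(1) pi_perm is_perm_def by blast
  obtain s1 s2 where sp: "subseq s1 \<alpha>'" "subseq s2 tb" "s0 @ [v] = s1 @ s2 \<or> s0 @ [v] = s1 @ n # s2"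
    using subseq_split3[OF sv(1)[unfolded \<pi>_def]] by blast
  have S1: "set s1 \<subseteq> set \<alpha>'" using subseq_set sp(1) by blast
  have S2: "set s2 \<subseteq> set tb" using subseq_set sp(2) by blast
  show ?thesis
  proof (cases "s2 = []")
    case True
    have "subseq s0 \<alpha>'"
    proof (cases "s0 @ [v] = s1 @ s2")
      case True2: True
      then have "s1 = s0 @ [v]" using True by simp
      then show ?thesis using sp(1) by (metis subseq_order.trans subseq_rev_drop_many subseq_order.order_refl)
    next
      case False
      then have "s0 @ [v] = s1 @ [n]" using sp(3) True by simp
      then show ?thesis using sp(1) by simp
    qed
    then have "contains \<alpha>' \<sigma>" using sv(2) unfolding contains_def by blast
    then show ?thesis using contains_a' by blast
  next
    case False
    have lastv: "v = last s2"
      using sp(3)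
    proof (elim disjE)
      assume "s0 @ [v] = s1 @ s2"
      then have "last (s0 @ [v]) = last (s1 @ s2)" by (rule arg_cong)
      then show ?thesis using False by (simp add: last_append)
    next
      assume "s0 @ [v] = s1 @ n # s2"
      then have "last (s0 @ [v]) = last (s1 @ n # s2)" by (rule arg_cong)
      then show ?thesis using False by (simp add: last_append)
    qed
    then have "v \<in> set tb" using False S2 last_in_set by blast
    then have "v \<le> m" using tb_props by blast
    then have "v < n" using km n_def by linarith
    then have "n \<notin> set (s0 @ [v])" using sv(3) by auto
    moreover have "s0 @ [v] = s1 @ n # s2 \<Longrightarrow> n \<in> set (s0 @ [v])"
    proof -
      assume h: "s0 @ [v] = s1 @ n # s2"
      show "n \<in> set (s0 @ [v])" unfolding h by simp
    qed
    ultimately have eq: "s0 @ [v] = s1 @ s2" using sp(3) by blast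
    have "s2 = butlast s2 @ [v]" using False lastv by simp
    then have "s0 = s1 @ butlast s2" using eq by (metis append.assoc butlast_snoc)
    then have "\<forall>x\<in>set s1. x < v" using sv(3) by simp
    then have ss: "set s1 \<subseteq> {t0}" using S1 small_is_t0 \<open>v \<le> m\<close> by fastforce
    have "distinct s1" using dist eq by (metis distinct_append)
    then have "s1 = [] \<or> s1 = [t0]" using ss by (rule distinct_sub_single)
    then have "subseq s1 [t0]" by (elim disjE) simp_all
    then have "subseq (s1 @ s2) ([t0] @ tb)" using sp(2) by (rule list_emb_append_mono)
    then have "subseq (s0 @ [v]) \<tau>" using eq tau_eq by simp
    then show ?thesis using contains_snoc_iff[OF assms(1)] sv by blast
  qed
qed

lemma pi_Av:
  assumes "\<forall>\<sigma>\<in>R. is_perm \<sigma>"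
  shows "\<pi> \<in> Av n ({[1,2,4,3],[2,1,4,3]} \<union> append_max ` R) \<longleftrightarrow>
    \<alpha> \<in> Av k ({[1,2,4,3],[2,1,4,3]} \<union> R) \<and> \<tau> \<in> Av m ({[1,2,4,3],[2,1,4,3]} \<union> append_max ` R)"
proof -
  have dp: "distinct \<pi>" "distinct \<alpha>" "distinct \<tau>" using pi_perm pa pt unfolding is_perm_def by auto
  have b: "bad4 \<pi> \<longleftrightarrow> bad4 \<alpha> \<or> bad4 \<tau>"
  proof -
    have "bad4 \<alpha>' \<longleftrightarrow> bad4 \<alpha>" unfolding a'_def using bad4_map[OF f_mono dp(2)] .
    then show ?thesis using bad4_pi bad4_subseq a'_sub2 tau_sub by blast
  qed
  have r: "(\<forall>\<sigma>\<in>R. avoids \<pi> (append_max \<sigma>)) \<longleftrightarrow>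
      (\<forall>\<sigma>\<in>R. avoids \<alpha> \<sigma>) \<and> (\<forall>\<sigma>\<in>R. avoids \<tau> (append_max \<sigma>))"
    using rn_pi rn_alpha contains_trans[OF tau_sub] assms unfolding avoids_def by blast
  have "\<pi> \<in> Av n ({[1,2,4,3],[2,1,4,3]} \<union> append_max ` R) \<longleftrightarrow>
      \<not> bad4 \<pi> \<and> (\<forall>\<sigma>\<in>R. avoids \<pi> (append_max \<sigma>))"
    using pi_perm pi_len avoid_S0_iff[OF dp(1)] unfolding Av_def by auto
  moreover have "\<alpha> \<in> Av k ({[1,2,4,3],[2,1,4,3]} \<union> R) \<longleftrightarrow>
      \<not> bad4 \<alpha> \<and> (\<forall>\<sigma>\<in>R. avoids \<alpha> \<sigma>)"
    using pa k_def avoid_S0_iff[OF dp(2)] unfolding Av_def by auto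
  moreover have "\<tau> \<in> Av m ({[1,2,4,3],[2,1,4,3]} \<union> append_max ` R) \<longleftrightarrow>
      \<not> bad4 \<tau> \<and> (\<forall>\<sigma>\<in>R. avoids \<tau> (append_max \<sigma>))"
    using pt m_def avoid_S0_iff[OF dp(3)] unfolding Av_def by auto
  ultimately show ?thesis using b r by blast
qed

end

definition Phi :: "nat list \<Rightarrow> nat list \<Rightarrow> nat list" where
  "Phi \<alpha> \<tau> = map (\<lambda>x. if x = 1 then hd \<tau> else x + length \<tau> - 1) \<alpha> @ (length \<alpha> + length \<tau>) # tl \<tau>"

lemma phi_interp:
  assumes "is_perm \<alpha>" "\<alpha> \<noteq> []" "is_perm \<tau>" "\<tau> \<noteq> []"
  shows "phi_setup \<alpha> \<tau> (length \<alpha>) (length \<tau>) (hd \<tau>) (length \<alpha> + length \<tau>) (tl \<tau>)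
     (map (\<lambda>x. if x = 1 then hd \<tau> else x + length \<tau> - 1) \<alpha>) (\<lambda>x. if x = 1 then hd \<tau> else x + length \<tau> - 1)"
  using assms by unfold_locales auto

lemma Phi_eq:
  assumes "is_perm \<alpha>" "\<alpha> \<noteq> []" "is_perm \<tau>" "\<tau> \<noteq> []"
  shows "Phi \<alpha> \<tau> = phi_setup.\<pi> (length \<alpha> + length \<tau>) (tl \<tau>) (map (\<lambda>x. if x = 1 then hd \<tau> else x + length \<tau> - 1) \<alpha>)"
  using phi_setup.\<pi>_def[OF phi_interp[OF assms]] unfolding Phi_def by simp

lemma Phi_props:
  assumes "is_perm \<alpha>" "\<alpha> \<noteq> []" "is_perm \<tau>" "\<tau> \<noteq> []" "\<forall>\<sigma>\<in>R. is_perm \<sigma>"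
  shows "Phi \<alpha> \<tau> ! length \<alpha> = length \<alpha> + length \<tau>"
    "Phi \<alpha> \<tau> \<in> Av (length \<alpha> + length \<tau>) ({[1,2,4,3],[2,1,4,3]} \<union> append_max ` R) \<longleftrightarrow>
     \<alpha> \<in> Av (length \<alpha>) ({[1,2,4,3],[2,1,4,3]} \<union> R) \<and>
     \<tau> \<in> Av (length \<tau>) ({[1,2,4,3],[2,1,4,3]} \<union> append_max ` R)"
  using phi_setup.pi_nth[OF phi_interp[OF assms(1-4)]] phi_setup.pi_Av[OF phi_interp[OF assms(1-4)] assms(5)]
  unfolding Phi_eq[OF assms(1-4)] by auto

lemma Phi_inj:
  assumes "is_perm \<alpha>1" "\<alpha>1 \<noteq> []" "is_perm \<tau>1" "\<tau>1 \<noteq> []"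
    "is_perm \<alpha>2" "\<alpha>2 \<noteq> []" "is_perm \<tau>2" "\<tau>2 \<noteq> []"
    "length \<alpha>1 = length \<alpha>2" "length \<tau>1 = length \<tau>2" "Phi \<alpha>1 \<tau>1 = Phi \<alpha>2 \<tau>2"
  shows "\<alpha>1 = \<alpha>2 \<and> \<tau>1 = \<tau>2"
proof -
  define f1 where "f1 = (\<lambda>x. if x = 1 then hd \<tau>1 else x + length \<tau>1 - 1)"
  define f2 where "f2 = (\<lambda>x. if x = 1 then hd \<tau>2 else x + length \<tau>2 - 1)"
  interpret A: phi_setup \<alpha>1 \<tau>1 "length \<alpha>1" "length \<tau>1" "hd \<tau>1" "length \<alpha>1 + length \<tau>1" "tl \<tau>1" "map f1 \<alpha>1" f1
    unfolding f1_def by (rule phi_interp[OF assms(1-4)])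
  interpret B: phi_setup \<alpha>2 \<tau>2 "length \<alpha>2" "length \<tau>2" "hd \<tau>2" "length \<alpha>2 + length \<tau>2" "tl \<tau>2" "map f2 \<alpha>2" f2
    unfolding f2_def by (rule phi_interp[OF assms(5-8)])
  have e1: "Phi \<alpha>1 \<tau>1 = map f1 \<alpha>1 @ (length \<alpha>1 + length \<tau>1) # tl \<tau>1" unfolding Phi_def f1_def by simp
  have e2: "Phi \<alpha>2 \<tau>2 = map f2 \<alpha>2 @ (length \<alpha>2 + length \<tau>2) # tl \<tau>2" unfolding Phi_def f2_def by simp
  have l1: "length (map f1 \<alpha>1) = length (map f2 \<alpha>2)" using assms(9) by simp
  have ma: "map f1 \<alpha>1 = map f2 \<alpha>2" and tl: "tl \<tau>1 = tl \<tau>2"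
    using assms(11) l1 unfolding e1 e2 by (auto simp: append_eq_append_conv)
  have "hd \<tau>1 \<in> set (map f2 \<alpha>2)" using A.t0_in ma by simp
  moreover have "hd \<tau>1 \<le> length \<tau>2" using A.t0_range assms(10) by simp
  ultimately have hd: "hd \<tau>1 = hd \<tau>2" using B.small_is_t0 by blast
  then have "f1 = f2" unfolding f1_def f2_def using assms(10) by (intro ext) simp
  moreover have "inj_on f1 (set \<alpha>1 \<union> set \<alpha>2)"
  proof -
    have "set \<alpha>1 \<union> set \<alpha>2 = set \<alpha>1" using A.set_alpha B.set_alpha assms(9) by simp
    then show ?thesis using A.f_mono unfolding inj_on_def by (metis not_less_iff_gr_or_eq)
  qed
  ultimately have "\<alpha>1 = \<alpha>2" using ma inj_on_map_eq_map by metis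
  moreover have "\<tau>1 = \<tau>2" using hd tl assms(4,8) by (metis list.collapse)
  ultimately show ?thesis by simp
qed

lemma pair_subseq: "x \<in> set xs \<Longrightarrow> y \<in> set xs \<Longrightarrow> x \<noteq> y \<Longrightarrow> subseq [x,y] xs \<or> subseq [y,x] xs"
proof (induction xs)
  case (Cons z zs)
  show ?case
  proof (cases "z = x")
    case True
    then have "y \<in> set zs" using Cons by auto
    then show ?thesis using True by (simp add: subseq_singleton_left)
  next
    case False
    show ?thesis
    proof (cases "z = y")
      case True
      then have "x \<in> set zs" using Cons False by auto
      then show ?thesis using True by (simp add: subseq_singleton_left)
    next
      case False2: False
      then have "x \<in> set zs" "y \<in> set zs" using Cons False by auto
      then have "subseq [x,y] zs \<or> subseq [y,x] zs" using Cons by blast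
      then show ?thesis by (meson list_emb.list_emb_Cons)
    qed
  qed
qed simp

lemma Phi_surj:
  assumes "\<pi> \<in> Av n ({[1,2,4,3],[2,1,4,3]} \<union> append_max ` R)" "1 \<le> k" "k < n" "\<pi> ! k = n"
  shows "\<exists>\<alpha> \<tau>. is_perm \<alpha> \<and> length \<alpha> = k \<and> is_perm \<tau> \<and> length \<tau> = n - k \<and> Phi \<alpha> \<tau> = \<pi>"
proof -
  have pp: "is_perm \<pi>" "length \<pi> = n" and av: "\<forall>\<sigma>\<in>{[1,2,4,3],[2,1,4,3]}. avoids \<pi> \<sigma>"
    using assms(1) unfolding Av_def by auto
  have dp: "distinct \<pi>" and sp: "set \<pi> = {1..n}" using pp unfolding is_perm_def by auto
  have nb: "\<not> bad4 \<pi>" using avoid_S0_iff[OF dp] av by blast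
  define a' where "a' = take k \<pi>"
  define tb where "tb = drop (Suc k) \<pi>"
  define m where "m = n - k"
  have hp: "\<pi> = a' @ n # tb" unfolding a'_def tb_def using assms(3,4) pp(2) id_take_nth_drop by metis
  have la: "length a' = k" unfolding a'_def using assms(3) pp(2) by simp
  have lt: "length tb = n - Suc k" unfolding tb_def using pp(2) by simp
  have da: "distinct a'" and dt: "distinct tb" and na: "n \<notin> set a'" and nt: "n \<notin> set tb"
    and disj: "set a' \<inter> set tb = {}" using dp unfolding hp by auto
  have vals: "\<forall>x\<in>set a'. 1 \<le> x \<and> x < n" "\<forall>x\<in>set tb. 1 \<le> x \<and> x < n"
    using sp na nt unfolding hp by (auto simp: order.order_iff_strict)
  have ane: "a' \<noteq> []" using la assms(2) by auto
  define t0 where "t0 = Min (set a')"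
  have t0in: "t0 \<in> set a'" unfolding t0_def using ane by simp
  have t0min: "\<forall>y\<in>set a'. t0 \<le> y" unfolding t0_def by simp
  have C1: "\<forall>y\<in>set a'. y \<noteq> t0 \<longrightarrow> (\<forall>d\<in>set tb. d < y)"
  proof (intro ballI impI)
    fix y d assume y: "y \<in> set a'" "y \<noteq> t0" and d: "d \<in> set tb"
    show "d < y"
    proof (rule ccontr)
      assume "\<not> d < y"
      moreover have "d \<noteq> y" using disj y d by auto
      ultimately have "y < d" by simp
      moreover have "t0 < y" using t0min y le_neq_trans by metis
      moreover have "d < n" using vals d by blast
      moreover have "subseq [t0,y] a' \<or> subseq [y,t0] a'" using pair_subseq t0in y by metis
      ultimately obtain x1 x2 where "subseq [x1,x2] a'" "x1 < d" "x2 < d" "d < n" by fastforce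
      moreover have "subseq [d] tb" using d subseq_singleton_left by metis
      then have "subseq ([n] @ [d]) ([n] @ tb)" by simp
      ultimately have "subseq ([x1,x2] @ [n] @ [d]) (a' @ [n] @ tb)" using list_emb_append_mono
        by blast
      then have "bad4 \<pi>" unfolding bad4_def hp using \<open>x1 < d\<close> \<open>x2 < d\<close> \<open>d < n\<close> by auto
      then show False using nb by blast
    qed
  qed
  define L where "L = insert t0 (set tb)"
  have t0tb: "t0 \<notin> set tb" using disj t0in by auto
  have cardL: "card L = m" unfolding L_def m_def using t0tb dt lt assms(3) by (simp add: distinct_card)
  have C2: "\<forall>x\<in>L. x \<le> m"
  proof
    fix x assume x: "x \<in> L"
    have "{1..x} \<subseteq> L"
    proof
      fix z assume z: "z \<in> {1..x}"
      have xn: "x < n" using x vals t0in unfolding L_def by auto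
      then have "z \<in> set \<pi>" using z sp by auto
      then have "z \<in> set a' \<or> z = n \<or> z \<in> set tb" unfolding hp by auto
      moreover have "z \<noteq> n" using z xn by auto
      moreover have "z \<in> set a' \<Longrightarrow> z \<noteq> t0 \<Longrightarrow> False"
      proof -
        assume za: "z \<in> set a'" "z \<noteq> t0"
        show False
        proof (cases "x = t0")
          case True
          then show False using t0min za z by (metis atLeastAtMost_iff order.antisym)
        next
          case False
          then have "x \<in> set tb" using x unfolding L_def by simp
          then have "x < z" using C1 za by blast
          then show False using z by simp
        qed
      qed
      ultimately show "z \<in> L" unfolding L_def by blast
    qed
    moreover have "finite L" unfolding L_def by simp
    ultimately have "card {1..x} \<le> card L" by (rule card_mono[rotated])
    then show "x \<le> m" using cardL by simp
  qed
  have C3: "\<forall>y\<in>set a'. y \<noteq> t0 \<longrightarrow> m + 1 \<le> y"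
  proof (intro ballI impI)
    fix y assume y: "y \<in> set a'" "y \<noteq> t0"
    have "insert y L \<subseteq> {1..y}"
    proof
      fix z assume "z \<in> insert y L"
      then have "z = y \<or> z = t0 \<or> z \<in> set tb" unfolding L_def by auto
      moreover have "t0 < y" using t0min y le_neq_trans by metis
      ultimately show "z \<in> {1..y}" using C1 y vals t0in by fastforce
    qed
    moreover have "y \<notin> L" using y disj unfolding L_def by auto
    ultimately have "card (insert y L) \<le> y" using card_mono[of "{1..y}" "insert y L"] by simp
    then show "m + 1 \<le> y" using cardL \<open>y \<notin> L\<close> unfolding L_def by simp
  qed
  define g where "g = (\<lambda>x. if x = t0 then 1 else x + 1 - m)"
  define \<alpha> where "\<alpha> = map g a'"
  define \<tau> where "\<tau> = t0 # tb"
  have ltau: "length \<tau> = m" unfolding \<tau>_def m_def using lt assms(3) by simp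
  have ptau: "is_perm \<tau>"
  proof (rule is_perm_intro)
    show "distinct \<tau>" unfolding \<tau>_def using t0tb dt by simp
    show "set \<tau> \<subseteq> {1..length \<tau>}" unfolding ltau using C2 vals t0in unfolding \<tau>_def L_def by auto
  qed
  have ginj: "inj_on g (set a')"
  proof (rule inj_onI)
    fix x y assume xy: "x \<in> set a'" "y \<in> set a'" "g x = g y"
    show "x = y"
    proof (cases "x = t0"; cases "y = t0")
      assume "x = t0" "y \<noteq> t0" then show ?thesis using xy C3 unfolding g_def by fastforce
    next
      assume "x \<noteq> t0" "y = t0" then show ?thesis using xy C3 unfolding g_def by fastforce
    next
      assume "x \<noteq> t0" "y \<noteq> t0" then show ?thesis using xy C3 unfolding g_def by fastforce
    qed simp
  qed
  have lal: "length \<alpha> = k" unfolding \<alpha>_def using la by simp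
  have palpha: "is_perm \<alpha>"
  proof (rule is_perm_intro)
    show "distinct \<alpha>" unfolding \<alpha>_def using ginj da by (simp add: distinct_map)
    show "set \<alpha> \<subseteq> {1..length \<alpha>}" unfolding lal
    proof
      fix z assume "z \<in> set \<alpha>"
      then obtain x where x: "x \<in> set a'" "z = g x" unfolding \<alpha>_def by auto
      show "z \<in> {1..k}"
      proof (cases "x = t0")
        case True then show ?thesis using x assms(2) unfolding g_def by simp
      next
        case False
        then have "m + 1 \<le> x" "x < n" using C3 vals x by auto
        then show ?thesis using x False assms(3) unfolding g_def m_def by (simp, arith)
      qed
    qed
  qed
  have "map (\<lambda>x. if x = 1 then hd \<tau> else x + length \<tau> - 1) \<alpha> = a'"
  proof -
    have H: "\<forall>x\<in>set a'. (\<lambda>x. if x = 1 then t0 else x + m - 1) (g x) = x"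
    proof
      fix x assume x: "x \<in> set a'"
      show "(\<lambda>x. if x = 1 then t0 else x + m - 1) (g x) = x"
      proof (cases "x = t0")
        case False
        then have "m + 1 \<le> x" using C3 x by auto
        then show ?thesis using False unfolding g_def by simp
      qed (simp add: g_def)
    qed
    have "hd \<tau> = t0" by (simp add: \<tau>_def)
    show ?thesis unfolding \<alpha>_def map_map
    proof (intro map_idI)
      fix x assume "x \<in> set a'"
      then show "((\<lambda>x. if x = 1 then hd \<tau> else x + length \<tau> - 1) \<circ> g) x = x"
        using H unfolding o_def \<open>hd \<tau> = t0\<close> ltau by blast
    qed
  qed
  then have "Phi \<alpha> \<tau> = \<pi>" unfolding Phi_def hp using lal ltau m_def assms(3) \<tau>_def by simp
  then show ?thesis using palpha lal ptau ltau m_def by blast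
qed

lemma Av_finite: "finite (Av n S)"
proof -
  have "Av n S \<subseteq> {xs. set xs \<subseteq> {1..n} \<and> length xs = n}" unfolding Av_def is_perm_def by auto
  moreover have "finite {xs. set xs \<subseteq> {1..n} \<and> length xs = n}" by (rule finite_lists_length_eq) simp
  ultimately show ?thesis by (rule finite_subset)
qed

lemma Av_mem: "\<pi> \<in> Av n S \<Longrightarrow> is_perm \<pi> \<and> length \<pi> = n" unfolding Av_def by auto

lemma card_Ak:
  assumes R: "\<forall>\<sigma>\<in>R. is_perm \<sigma>" and k: "1 \<le> k" "k < n"
  shows "card {\<pi> \<in> Av n ({[1,2,4,3],[2,1,4,3]} \<union> append_max ` R). \<pi> ! k = n} =
    card (Av k ({[1,2,4,3],[2,1,4,3]} \<union> R)) * card (Av (n - k) ({[1,2,4,3],[2,1,4,3]} \<union> append_max ` R))"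
proof -
  let ?SQ = "{[1,2,4,3],[2,1,4,3]} \<union> append_max ` R"
  let ?SR = "{[1,2,4,3],[2,1,4,3]} \<union> R"
  have ne: "\<And>\<alpha>. \<alpha> \<in> Av k ?SR \<Longrightarrow> \<alpha> \<noteq> []" "\<And>\<tau>. \<tau> \<in> Av (n-k) ?SQ \<Longrightarrow> \<tau> \<noteq> []"
    using k by (auto dest!: Av_mem)
  have "bij_betw (\<lambda>(\<alpha>,\<tau>). Phi \<alpha> \<tau>) (Av k ?SR \<times> Av (n-k) ?SQ) {\<pi> \<in> Av n ?SQ. \<pi> ! k = n}"
  proof (rule bij_betw_imageI)
    show "inj_on (\<lambda>(\<alpha>,\<tau>). Phi \<alpha> \<tau>) (Av k ?SR \<times> Av (n-k) ?SQ)"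
    proof (rule inj_onI, clarify)
      fix a1 t1 a2 t2 assume h: "a1 \<in> Av k ?SR" "t1 \<in> Av (n-k) ?SQ" "a2 \<in> Av k ?SR" "t2 \<in> Av (n-k) ?SQ"
        "Phi a1 t1 = Phi a2 t2"
      show "a1 = a2 \<and> t1 = t2"
        using Phi_inj[of a1 t1 a2 t2] h ne Av_mem[OF h(1)] Av_mem[OF h(2)] Av_mem[OF h(3)] Av_mem[OF h(4)]
        by metis
    qed
    show "(\<lambda>(\<alpha>,\<tau>). Phi \<alpha> \<tau>) ` (Av k ?SR \<times> Av (n-k) ?SQ) = {\<pi> \<in> Av n ?SQ. \<pi> ! k = n}"
    proof
      show "(\<lambda>(\<alpha>,\<tau>). Phi \<alpha> \<tau>) ` (Av k ?SR \<times> Av (n-k) ?SQ) \<subseteq> {\<pi> \<in> Av n ?SQ. \<pi> ! k = n}"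
      proof
        fix x assume "x \<in> (\<lambda>(\<alpha>,\<tau>). Phi \<alpha> \<tau>) ` (Av k ?SR \<times> Av (n-k) ?SQ)"
        then obtain a t where h: "a \<in> Av k ?SR" "t \<in> Av (n-k) ?SQ" and xe: "x = Phi a t" by auto
        have l: "length a = k" "length t = n - k" "is_perm a" "is_perm t" using Av_mem h by auto
        have "length a + length t = n" using l k by simp
        then show "x \<in> {\<pi> \<in> Av n ?SQ. \<pi> ! k = n}"
          using Phi_props[OF l(3) ne(1)[OF h(1)] l(4) ne(2)[OF h(2)] R] h l xe by auto
      qed
    next
      show "{\<pi> \<in> Av n ?SQ. \<pi> ! k = n} \<subseteq> (\<lambda>(\<alpha>,\<tau>). Phi \<alpha> \<tau>) ` (Av k ?SR \<times> Av (n-k) ?SQ)"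
      proof
        fix \<pi> assume "\<pi> \<in> {\<pi> \<in> Av n ?SQ. \<pi> ! k = n}"
        then have h: "\<pi> \<in> Av n ?SQ" "\<pi> ! k = n" by auto
        obtain a t where at: "is_perm a" "length a = k" "is_perm t" "length t = n - k" "Phi a t = \<pi>"
          using Phi_surj[OF h(1) k h(2)] by blast
        have nz: "a \<noteq> []" "t \<noteq> []" using at k by auto
        have "length a + length t = n" using at k by simp
        then have "a \<in> Av k ?SR \<and> t \<in> Av (n - k) ?SQ"
          using Phi_props[OF at(1) nz(1) at(3) nz(2) R] h at by auto
        then show "\<pi> \<in> (\<lambda>(\<alpha>,\<tau>). Phi \<alpha> \<tau>) ` (Av k ?SR \<times> Av (n-k) ?SQ)"
          using at(5) by force
      qed
    qed
  qed
  then have "card (Av k ?SR \<times> Av (n-k) ?SQ) = card {\<pi> \<in> Av n ?SQ. \<pi> ! k = n}"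
    by (rule bij_betw_same_card)
  then show ?thesis unfolding card_cartesian_product by simp
qed

lemma bad4_Cons_max:
  assumes "bad4 (n # \<beta>)" "\<forall>x\<in>set \<beta>. x \<le> n"
  shows "bad4 \<beta>"
proof -
  obtain a b c d where s: "subseq [a,b,c,d] ([] @ n # \<beta>)" "a < d" "b < d" "d < c"
    using assms(1) unfolding bad4_def by auto
  obtain s1 s2 where sp: "subseq s1 []" "subseq s2 \<beta>" "[a,b,c,d] = s1 @ s2 \<or> [a,b,c,d] = s1 @ n # s2"
    using subseq_split3[OF s(1)] by blast
  have "s1 = []" using sp(1) by simp
  show ?thesis
  proof (cases "[a,b,c,d] = s2")
    case True then show ?thesis using sp(2) s unfolding bad4_def by blast
  next
    case False
    then have "a = n" "s2 = [b,c,d]" using sp(3) \<open>s1 = []\<close> by auto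
    then have "d \<le> n" using sp(2) assms(2) subseq_set by fastforce
    then show ?thesis using s \<open>a = n\<close> by simp
  qed
qed

lemma rn_Cons_max:
  assumes "is_perm \<sigma>" "\<sigma> \<noteq> []" "contains (n # \<beta>) (append_max \<sigma>)" "\<forall>x\<in>set \<beta>. x \<le> n"
  shows "contains \<beta> (append_max \<sigma>)"
proof -
  obtain s0 v where sv: "subseq (s0 @ [v]) ([] @ n # \<beta>)" "order_iso s0 \<sigma>" "\<forall>x\<in>set s0. x < v"
    using assms contains_snoc_iff by auto
  obtain s1 s2 where sp: "subseq s1 []" "subseq s2 \<beta>" "s0 @ [v] = s1 @ s2 \<or> s0 @ [v] = s1 @ n # s2"
    using subseq_split3[OF sv(1)] by blast
  have "s1 = []" using sp(1) by simp
  show ?thesis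
  proof (cases "s0 @ [v] = s2")
    case True then show ?thesis using sp(2) sv contains_snoc_iff[OF assms(1)] by blast
  next
    case False
    then have eq: "s0 @ [v] = n # s2" using sp(3) \<open>s1 = []\<close> by auto
    have "s0 \<noteq> []" using sv(2) assms(2) unfolding order_iso_def by auto
    then have "hd s0 = n" using eq by (metis hd_append2 list.sel(1))
    then have "n < v" using sv(3) \<open>s0 \<noteq> []\<close> by (metis hd_in_set)
    moreover have "v \<in> set s2" using eq \<open>s0 \<noteq> []\<close>
      by (metis Cons_eq_append_conv in_set_conv_decomp)
    then have "v \<le> n" using sp(2) assms(4) subseq_set by fastforce
    ultimately show ?thesis by simp
  qed
qed

unbundle fps_syntax

lemma card_A0:
  assumes R: "\<forall>\<sigma>\<in>R. is_perm \<sigma> \<and> length \<sigma> \<ge> 1" and n: "1 \<le> n"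
  shows "card {\<pi> \<in> Av n ({[1,2,4,3],[2,1,4,3]} \<union> append_max ` R). \<pi> ! 0 = n} =
    card (Av (n - 1) ({[1,2,4,3],[2,1,4,3]} \<union> append_max ` R))"
proof -
  let ?SQ = "{[1,2,4,3],[2,1,4,3]} \<union> append_max ` R"
  have "bij_betw (\<lambda>\<beta>. n # \<beta>) (Av (n-1) ?SQ) {\<pi> \<in> Av n ?SQ. \<pi> ! 0 = n}"
  proof (rule bij_betw_imageI)
    show "inj_on (\<lambda>\<beta>. n # \<beta>) (Av (n-1) ?SQ)" by (simp add: inj_on_def)
    show "(\<lambda>\<beta>. n # \<beta>) ` Av (n-1) ?SQ = {\<pi> \<in> Av n ?SQ. \<pi> ! 0 = n}"
    proof
      show "(\<lambda>\<beta>. n # \<beta>) ` Av (n-1) ?SQ \<subseteq> {\<pi> \<in> Av n ?SQ. \<pi> ! 0 = n}"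
      proof
        fix x assume "x \<in> (\<lambda>\<beta>. n # \<beta>) ` Av (n-1) ?SQ"
        then obtain \<beta> where b: "\<beta> \<in> Av (n-1) ?SQ" and xe: "x = n # \<beta>" by auto
        have pb: "is_perm \<beta>" "length \<beta> = n - 1" using Av_mem[OF b] by auto
        have sb: "set \<beta> = {1..n-1}" using pb unfolding is_perm_def by simp
        have le: "\<forall>x\<in>set \<beta>. x \<le> n" using sb by auto
        have pnb: "is_perm (n # \<beta>)"
        proof (rule is_perm_intro)
          show "distinct (n # \<beta>)" using pb sb n unfolding is_perm_def by auto
          show "set (n # \<beta>) \<subseteq> {1..length (n # \<beta>)}" using sb pb n by auto
        qed
        have avb: "\<forall>\<sigma>\<in>?SQ. avoids \<beta> \<sigma>" using b unfolding Av_def by auto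
        have db: "distinct \<beta>" "distinct (n # \<beta>)" using pb pnb unfolding is_perm_def by auto
        have "\<not> bad4 (n # \<beta>)"
          using bad4_Cons_max[OF _ le] avoid_S0_iff[OF db(1)] avb by blast
        then have "\<forall>\<sigma>\<in>{[1,2,4,3],[2,1,4,3]}. avoids (n # \<beta>) \<sigma>" using avoid_S0_iff[OF db(2)] by blast
        moreover have "\<forall>\<sigma>\<in>R. avoids (n # \<beta>) (append_max \<sigma>)"
        proof
          fix \<sigma> assume "\<sigma> \<in> R"
          then have "is_perm \<sigma>" "\<sigma> \<noteq> []" using R by auto
          then show "avoids (n # \<beta>) (append_max \<sigma>)"
            using rn_Cons_max[OF _ _ _ le] avb \<open>\<sigma> \<in> R\<close> unfolding avoids_def by blast
        qed
        ultimately have "n # \<beta> \<in> Av n ?SQ" using pnb pb n unfolding Av_def by auto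
        then show "x \<in> {\<pi> \<in> Av n ?SQ. \<pi> ! 0 = n}" using xe by simp
      qed
    next
      show "{\<pi> \<in> Av n ?SQ. \<pi> ! 0 = n} \<subseteq> (\<lambda>\<beta>. n # \<beta>) ` Av (n-1) ?SQ"
      proof
        fix \<pi> assume "\<pi> \<in> {\<pi> \<in> Av n ?SQ. \<pi> ! 0 = n}"
        then have h: "\<pi> \<in> Av n ?SQ" "\<pi> ! 0 = n" by auto
        have pp: "is_perm \<pi>" "length \<pi> = n" using Av_mem[OF h(1)] by auto
        have "\<pi> \<noteq> []" using pp n by auto
        then have pe: "\<pi> = n # tl \<pi>" using h(2) by (metis hd_conv_nth list.collapse)
        have dp: "distinct (n # tl \<pi>)" and sp: "set (n # tl \<pi>) = {1..n}"
          using pp pe unfolding is_perm_def by metis+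
        have ptl: "is_perm (tl \<pi>)"
        proof (rule is_perm_intro)
          show "distinct (tl \<pi>)" using dp by simp
          show "set (tl \<pi>) \<subseteq> {1..length (tl \<pi>)}"
          proof
            fix x assume x: "x \<in> set (tl \<pi>)"
            then have "x \<in> {1..n}" using sp by auto
            moreover have "x \<noteq> n" using dp x by auto
            ultimately show "x \<in> {1..length (tl \<pi>)}" using pp by auto
          qed
        qed
        have "\<forall>\<sigma>\<in>?SQ. avoids \<pi> \<sigma>" using h(1) unfolding Av_def by auto
        moreover have "subseq (tl \<pi>) (n # tl \<pi>)" by (intro list_emb.list_emb_Cons subseq_order.order_refl)
        then have "subseq (tl \<pi>) \<pi>" by (metis pe)
        ultimately have "\<forall>\<sigma>\<in>?SQ. avoids (tl \<pi>) \<sigma>" using contains_trans unfolding avoids_def by blast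
        then have "tl \<pi> \<in> Av (n-1) ?SQ" using ptl pp unfolding Av_def by auto
        then show "\<pi> \<in> (\<lambda>\<beta>. n # \<beta>) ` Av (n-1) ?SQ" using pe by (metis image_eqI)
      qed
    qed
  qed
  then have "card (Av (n-1) ?SQ) = card {\<pi> \<in> Av n ?SQ. \<pi> ! 0 = n}" by (rule bij_betw_same_card)
  then show ?thesis by (rule sym)
qed

lemma card_rec:
  assumes R: "\<forall>\<sigma>\<in>R. is_perm \<sigma> \<and> length \<sigma> \<ge> 1" and n: "1 \<le> n"
  shows "card (Av n ({[1,2,4,3],[2,1,4,3]} \<union> append_max ` R)) =
    card (Av (n - 1) ({[1,2,4,3],[2,1,4,3]} \<union> append_max ` R)) +
    (\<Sum>k\<in>{1..<n}. card (Av k ({[1,2,4,3],[2,1,4,3]} \<union> R)) * card (Av (n - k) ({[1,2,4,3],[2,1,4,3]} \<union> append_max ` R)))"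
proof -
  let ?SQ = "{[1,2,4,3],[2,1,4,3]} \<union> append_max ` R"
  let ?SR = "{[1,2,4,3],[2,1,4,3]} \<union> R"
  let ?A = "\<lambda>k. {\<pi> \<in> Av n ?SQ. \<pi> ! k = n}"
  have U: "Av n ?SQ = (\<Union>k\<in>{..<n}. ?A k)"
  proof
    show "Av n ?SQ \<subseteq> (\<Union>k\<in>{..<n}. ?A k)"
    proof
      fix \<pi> assume h: "\<pi> \<in> Av n ?SQ"
      then have "is_perm \<pi>" "length \<pi> = n" using Av_mem by auto
      then have "n \<in> set \<pi>" using n unfolding is_perm_def by auto
      then obtain k where "k < length \<pi>" "\<pi> ! k = n" by (auto simp: in_set_conv_nth)
      then show "\<pi> \<in> (\<Union>k\<in>{..<n}. ?A k)" using h \<open>length \<pi> = n\<close> by auto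
    qed
  qed auto
  have "card (Av n ?SQ) = card (\<Union>k\<in>{..<n}. ?A k)" by (rule arg_cong[OF U])
  also have "\<dots> = (\<Sum>k\<in>{..<n}. card (?A k))"
  proof (rule card_UN_disjoint)
    show "finite {..<n}" by simp
    show "\<forall>i\<in>{..<n}. finite (?A i)" using Av_finite by simp
    show "\<forall>i\<in>{..<n}. \<forall>j\<in>{..<n}. i \<noteq> j \<longrightarrow> ?A i \<inter> ?A j = {}"
    proof (intro ballI impI)
      fix i j assume ij: "i \<in> {..<n}" "j \<in> {..<n}" "i \<noteq> j"
      show "?A i \<inter> ?A j = {}"
      proof (rule ccontr)
        assume "?A i \<inter> ?A j \<noteq> {}"
        then obtain \<pi> where h: "\<pi> \<in> Av n ?SQ" "\<pi> ! i = n" "\<pi> ! j = n" by auto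
        then have d: "distinct \<pi>" and l: "length \<pi> = n" using Av_mem unfolding is_perm_def by auto
        have li: "i < length \<pi>" "j < length \<pi>" using ij l by auto
        have "i = j" using nth_eq_iff_index_eq[OF d li] h(2,3) by simp
        then show False using ij by simp
      qed
    qed
  qed
  also have "{..<n} = insert 0 {1..<n}" using n by auto
  also have "(\<Sum>k\<in>insert 0 {1..<n}. card (?A k)) = card (?A 0) + (\<Sum>k\<in>{1..<n}. card (?A k))"
    by simp
  also have "card (?A 0) = card (Av (n - 1) ?SQ)" using card_A0[OF R n] .
  also have "(\<Sum>k\<in>{1..<n}. card (?A k)) = (\<Sum>k\<in>{1..<n}. card (Av k ?SR) * card (Av (n - k) ?SQ))"
  proof (rule sum.cong)
    fix k assume "k \<in> {1..<n}"
    then show "card (?A k) = card (Av k ?SR) * card (Av (n - k) ?SQ)"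
      using card_Ak[of R k n] R by auto
  qed simp
  finally show ?thesis .
qed

lemma card_Av0:
  assumes "\<forall>\<sigma>\<in>S. \<sigma> \<noteq> []"
  shows "card (Av 0 S) = 1"
proof -
  have "Av 0 S = {[]}"
  proof
    show "Av 0 S \<subseteq> {[]}" unfolding Av_def by auto
    have "\<forall>\<sigma>\<in>S. avoids [] \<sigma>" using assms unfolding avoids_def contains_def order_iso_def by auto
    then show "{[]} \<subseteq> Av 0 S" unfolding Av_def is_perm_def by auto
  qed
  then show ?thesis by simp
qed

lemma genfun_nth: "genfun S $ n = of_nat (card (Av n S))"
  unfolding genfun_def by simp

theorem mainTheorem5:
  fixes R :: "nat list set"
  assumes "R \<noteq> {}"
    and "\<forall>\<sigma>\<in>R. is_perm \<sigma> \<and> length \<sigma> \<ge> 1"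
  shows "genfun ({[1,2,4,3], [2,1,4,3]} \<union> append_max ` R)
       = (2 - genfun ({[1,2,4,3], [2,1,4,3]} \<union> R))
         / (2 - fps_X - genfun ({[1,2,4,3], [2,1,4,3]} \<union> R))"
proof -
  let ?SQ = "{[1,2,4,3],[2,1,4,3]} \<union> append_max ` R"
  let ?SR = "{[1,2,4,3],[2,1,4,3]} \<union> R"
  define P where "P = genfun ?SR"
  define Q where "Q = genfun ?SQ"
  define p where "p = (\<lambda>k. card (Av k ?SR))"
  define q where "q = (\<lambda>k. card (Av k ?SQ))"
  have Pn: "\<And>k. P $ k = of_nat (p k)" unfolding P_def p_def genfun_nth by simp
  have Qn: "\<And>k. Q $ k = of_nat (q k)" unfolding Q_def q_def genfun_nth by simp
  have p0: "p 0 = 1" unfolding p_def using assms(2) by (intro card_Av0) (auto simp: append_max_def)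
  have q0: "q 0 = 1" unfolding q_def using assms(2) by (intro card_Av0) (auto simp: append_max_def)
  have rec: "\<And>n. 1 \<le> n \<Longrightarrow> q n = q (n - 1) + (\<Sum>k\<in>{1..<n}. p k * q (n - k))"
    unfolding p_def q_def using card_rec[OF assms(2)] by blast
  have key: "Q - 1 = fps_X * Q + (P - 1) * (Q - 1)"
  proof (rule fps_ext)
    fix n
    show "(Q - 1) $ n = (fps_X * Q + (P - 1) * (Q - 1)) $ n"
    proof (cases "n = 0")
      case True
      then show ?thesis using p0 q0 by (simp add: Pn Qn fps_mult_nth)
    next
      case False
      have "((P - 1) * (Q - 1)) $ n = (\<Sum>i=0..n. (P - 1) $ i * (Q - 1) $ (n - i))"
        by (simp add: fps_mult_nth)
      also have "\<dots> = (\<Sum>i\<in>{1..<n}. of_nat (p i * q (n - i)))"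
      proof (rule sum.mono_neutral_cong_right)
        show "finite {0..n}" by simp
        show "{1..<n} \<subseteq> {0..n}" by auto
        show "\<forall>i\<in>{0..n} - {1..<n}. (P - 1) $ i * (Q - 1) $ (n - i) = 0"
        proof
          fix i assume "i \<in> {0..n} - {1..<n}"
          then have "i = 0 \<or> i = n" by auto
          then show "(P - 1) $ i * (Q - 1) $ (n - i) = 0" using p0 q0 by (auto simp: Pn Qn)
        qed
        show "\<And>i. i \<in> {1..<n} \<Longrightarrow> (P - 1) $ i * (Q - 1) $ (n - i) = of_nat (p i * q (n - i))"
          by (auto simp: Pn Qn)
      qed
      finally have m: "((P - 1) * (Q - 1)) $ n = (\<Sum>i\<in>{1..<n}. of_nat (p i * q (n - i)))" .
      have "of_nat (q n) = (of_nat (q (n - 1) + (\<Sum>k\<in>{1..<n}. p k * q (n - k))) :: rat)"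
        using rec[of n] False by simp
      then have "Q $ n = Q $ (n - 1) + (\<Sum>i\<in>{1..<n}. of_nat (p i * q (n - i)))"
        unfolding Qn by simp
      then show ?thesis using False m by (simp add: fps_X_mult_nth)
    qed
  qed
  have eq: "Q * (2 - fps_X - P) = 2 - P"
  proof -
    have "Q * (2 - fps_X - P) - (2 - P) = (Q - 1) - (fps_X * Q + (P - 1) * (Q - 1))"
      by (simp add: algebra_simps)
    then show ?thesis using key by simp
  qed
  have nz: "2 - fps_X - P \<noteq> 0"
  proof
    assume "2 - fps_X - P = 0"
    then have "(2 - fps_X - P) $ 0 = 0" by simp
    then show False using p0 by (simp add: Pn)
  qed
  have "(2 - P) / (2 - fps_X - P) = Q"
    using fps_divide_times_eq[OF nz, of Q] eq by simp
  then show ?thesis unfolding P_def Q_def by simp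
qed

end
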